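(* Let $n\geq 2$ be even, $m>1$, and let $G$ be a non-regular bipartite graph of order $m$ with a bipartition $\{A,B\}$ such that all vertices of $A$ have the same degree and all vertices of $B$ have the same degree. Then $\chi_{ld}(G[\overline{K_{n}}])=2$.
   Context: All graphs are finite, simple and undirected, without isolated vertices. For a graph $G=(V,E)$ of order $N$ without isolated vertices, a bijection $f\colon V\to\{1,2,\dots,N\}$ is a local distance antimagic labeling if $w(u)\neq w(v)$ for every edge $uv$, where $w(u)=\sum_{x\in N(u)}f(x)$ and $N(u)$ is the open neighborhood of $u$. $\chi_{ld}(G)$ is the minimum number of distinct weights over all local distance antimagic labelings of $G$. $\overline{K_n}$ is the edgeless graph on $n$ vertices. The lexicographic product $G[H]$ has vertex set $V(G)\times V(H)$, with $(g,h)$ adjacent to $(g',h')$ iff $gg'\in E(G)$, or $g=g'$ and $hh'\in E(H)$. *)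

theory Defs
  imports Main
begin

definition simple_graph :: "'a set \<Rightarrow> ('a \<times> 'a) set \<Rightarrow> bool" where
  "simple_graph V E \<longleftrightarrow> finite V \<and> E \<subseteq> V \<times> V \<and> sym E \<and> (\<forall>x. (x, x) \<notin> E)"

definition nbhd :: "('a \<times> 'a) set \<Rightarrow> 'a \<Rightarrow> 'a set" where
  "nbhd E v = {u. (v, u) \<in> E}"

definition degree :: "('a \<times> 'a) set \<Rightarrow> 'a \<Rightarrow> nat" where
  "degree E v = card (nbhd E v)"

definition no_isolated :: "'a set \<Rightarrow> ('a \<times> 'a) set \<Rightarrow> bool" where
  "no_isolated V E \<longleftrightarrow> (\<forall>v\<in>V. nbhd E v \<noteq> {})"

definition regular :: "'a set \<Rightarrow> ('a \<times> 'a) set \<Rightarrow> bool" where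
  "regular V E \<longleftrightarrow> (\<forall>u\<in>V. \<forall>v\<in>V. degree E u = degree E v)"

definition bipartition :: "'a set \<Rightarrow> ('a \<times> 'a) set \<Rightarrow> 'a set \<Rightarrow> 'a set \<Rightarrow> bool" where
  "bipartition V E A B \<longleftrightarrow> A \<union> B = V \<and> A \<inter> B = {} \<and>
     (\<forall>(u, v)\<in>E. (u \<in> A \<and> v \<in> B) \<or> (u \<in> B \<and> v \<in> A))"

definition weight :: "('a \<times> 'a) set \<Rightarrow> ('a \<Rightarrow> nat) \<Rightarrow> 'a \<Rightarrow> nat" where
  "weight E f v = (\<Sum>x\<in>nbhd E v. f x)"

definition ld_antimagic :: "'a set \<Rightarrow> ('a \<times> 'a) set \<Rightarrow> ('a \<Rightarrow> nat) \<Rightarrow> bool" where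
  "ld_antimagic V E f \<longleftrightarrow> bij_betw f V {1..card V} \<and>
     (\<forall>(u, v)\<in>E. weight E f u \<noteq> weight E f v)"

definition chi_ld :: "'a set \<Rightarrow> ('a \<times> 'a) set \<Rightarrow> nat" where
  "chi_ld V E = (LEAST k. \<exists>f. ld_antimagic V E f \<and> k = card (weight E f ` V))"

definition lex_vertices :: "'a set \<Rightarrow> 'b set \<Rightarrow> ('a \<times> 'b) set" where
  "lex_vertices V1 V2 = V1 \<times> V2"

definition lex_edges :: "'a set \<Rightarrow> ('a \<times> 'a) set \<Rightarrow> 'b set \<Rightarrow> ('b \<times> 'b) set
    \<Rightarrow> (('a \<times> 'b) \<times> ('a \<times> 'b)) set" where
  "lex_edges V1 E1 V2 E2 = {((g, h), (g', h')). g \<in> V1 \<and> g' \<in> V1 \<and> h \<in> V2 \<and> h' \<in> V2 \<and>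
      ((g, g') \<in> E1 \<or> (g = g' \<and> (h, h') \<in> E2))}"

definition Kbar_vertices :: "nat \<Rightarrow> nat set" where
  "Kbar_vertices n = {0..<n}"

definition Kbar_edges :: "nat \<Rightarrow> (nat \<times> nat) set" where
  "Kbar_edges n = {}"

end

theory Submission
  imports Defs
begin

lemma divmod_uniq:
  fixes i i' h h' k :: nat
  assumes "h < k" "h' < k" "i*k+h = i'*k+h'"
  shows "i = i' \<and> h = h'"
proof -
  have k: "k > 0" using assms(1) by simp
  have "(i*k+h) div k = i" using assms(1) k by simp
  moreover have "(i'*k+h') div k = i'" using assms(2) k by simp
  moreover have "(i*k+h) mod k = h" using assms(1) by simp
  moreover have "(i'*k+h') mod k = h'" using assms(2) by simp
  ultimately show ?thesis using assms(3) by metis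
qed

lemma lt_mk:
  fixes i m h k :: nat
  assumes "i < m" "h < k"
  shows "i*k+h < m*k"
proof -
  have "i*k + h < Suc i * k" using assms(2) by simp
  also have "... \<le> m*k" using assms(1) by (intro mult_le_mono1) simp
  finally show ?thesis .
qed

definition lab :: "nat \<Rightarrow> nat \<Rightarrow> nat \<Rightarrow> nat \<Rightarrow> nat" where
  "lab k m i h = (if h < k then i*k+h+1 else 2*k*m - (i*k + (h-k)))"

lemma lab_low: assumes "i < m" "h < k" shows "1 \<le> lab k m i h \<and> lab k m i h \<le> m*k"
  using lt_mk[OF assms] assms by (simp add: lab_def)

lemma lab_high: assumes "i < m" "k \<le> h" "h < 2*k"
  shows "m*k < lab k m i h \<and> lab k m i h \<le> 2*k*m"
proof -
  have "i*k + (h-k) < m*k" using lt_mk[of i m "h-k" k] assms by simp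
  moreover have "lab k m i h = 2*k*m - (i*k+(h-k))" using assms by (simp add: lab_def)
  moreover have "2*k*m = 2*(m*k)" by simp
  ultimately show ?thesis by linarith
qed

lemma lab_inj: "inj_on (\<lambda>(i,h). lab k m i h) ({0..<m} \<times> {0..<2*k})"
proof (rule inj_onI, clarify)
  fix i h i' h'
  assume a: "i \<in> {0..<m}" "h \<in> {0..<2*k}" "i' \<in> {0..<m}" "h' \<in> {0..<2*k}"
    and eq: "lab k m i h = lab k m i' h'"
  show "i = i' \<and> h = h'"
  proof (cases "h < k")
    case True
    note T = True
    show ?thesis
    proof (cases "h' < k")
      case True
      then show ?thesis using T eq divmod_uniq[of h k h' i i'] by (simp add: lab_def)
    next
      case False
      then show ?thesis using lab_low[of i m h k] lab_high[of i' m k h'] a T eq by simp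
    qed
  next
    case False
    note F = False
    show ?thesis
    proof (cases "h' < k")
      case True
      then show ?thesis using lab_low[of i' m h' k] lab_high[of i m k h] a F eq by simp
    next
      case False
      have l1: "i*k + (h-k) < m*k" using lt_mk[of i m "h-k" k] a F by simp
      have l2: "i'*k + (h'-k) < m*k" using lt_mk[of i' m "h'-k" k] a False by simp
      have e1: "lab k m i h = 2*k*m - (i*k+(h-k))" using F by (simp add: lab_def)
      have e2: "lab k m i' h' = 2*k*m - (i'*k+(h'-k))" using False by (simp add: lab_def)
      have mk: "m*k \<le> 2*k*m" by simp
      have "i*k + (h-k) = i'*k + (h'-k)" using eq e1 e2 l1 l2 mk by linarith
      then have "i = i' \<and> h - k = h' - k" using divmod_uniq[of "h-k" k "h'-k" i i'] a by simp
      then show ?thesis using F False by linarith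
    qed
  qed
qed

lemma lab_colsum: assumes "i < m" shows "(\<Sum>h\<in>{0..<2*k}. lab k m i h) = k*(2*k*m+1)"
proof -
  have "(\<Sum>h\<in>{0..<2*k}. lab k m i h) = (\<Sum>h\<in>{0..<k}. lab k m i h) + (\<Sum>h\<in>{k..<2*k}. lab k m i h)"
    using sum.atLeastLessThan_concat[of 0 k "2*k" "lab k m i"] by simp
  also have "(\<Sum>h\<in>{k..<2*k}. lab k m i h) = (\<Sum>h\<in>{0..<k}. lab k m i (h+k))"
    using sum.shift_bounds_nat_ivl[of "lab k m i" 0 k k] by (simp add: mult_2)
  also have "(\<Sum>h\<in>{0..<k}. lab k m i h) + (\<Sum>h\<in>{0..<k}. lab k m i (h+k))
      = (\<Sum>h\<in>{0..<k}. lab k m i h + lab k m i (h+k))" by (simp add: sum.distrib)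
  also have "... = (\<Sum>h\<in>{0..<k}. 2*k*m+1)"
  proof (rule sum.cong)
    fix h assume "h \<in> {0..<k}"
    then have "i*k + h < m*k" using lt_mk assms by simp
    moreover have "m*k \<le> 2*k*m" by simp
    moreover have "lab k m i h = i*k+h+1" using \<open>h \<in> {0..<k}\<close> by (simp add: lab_def)
    moreover have "lab k m i (h+k) = 2*k*m - (i*k+h)" by (simp add: lab_def)
    ultimately show "lab k m i h + lab k m i (h+k) = 2*k*m+1" by linarith
  qed simp
  finally show ?thesis by simp
qed

lemma lex_nbhd:
  assumes "E \<subseteq> V \<times> V" "g \<in> V" "h < n"
  shows "nbhd (lex_edges V E (Kbar_vertices n) (Kbar_edges n)) (g,h) = nbhd E g \<times> {0..<n}"
  using assms unfolding nbhd_def lex_edges_def Kbar_vertices_def Kbar_edges_def by auto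

theorem mainTheorem17:
  fixes V :: "'a set" and E :: "('a \<times> 'a) set" and A B :: "'a set" and n m :: nat
  assumes "even n" and "n \<ge> 2" and "m > 1"
    and "simple_graph V E" and "no_isolated V E" and "card V = m"
    and "\<not> regular V E"
    and "bipartition V E A B"
    and "\<forall>u\<in>A. \<forall>v\<in>A. degree E u = degree E v"
    and "\<forall>u\<in>B. \<forall>v\<in>B. degree E u = degree E v"
  shows "chi_ld (lex_vertices V (Kbar_vertices n)) (lex_edges V E (Kbar_vertices n) (Kbar_edges n)) = 2"
proof -
  define V' where "V' = lex_vertices V (Kbar_vertices n)"
  define E' where "E' = lex_edges V E (Kbar_vertices n) (Kbar_edges n)"
  obtain k where nk: "n = 2*k" using assms(1) by (metis evenE)
  have k1: "k \<ge> 1" using assms(2) nk by simp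
  have fin: "finite V" and EV: "E \<subseteq> V \<times> V" and symE: "sym E"
    using assms(4) unfolding simple_graph_def by auto
  have V'eq: "V' = V \<times> {0..<n}" unfolding V'_def lex_vertices_def Kbar_vertices_def by simp
  have finV': "finite V'" using fin V'eq by simp
  have cardV': "card V' = 2*k*m" using V'eq assms(6) nk by (simp add: card_cartesian_product)
  have Vne: "V \<noteq> {}" using assms(3,6) by auto
  then obtain g0 where g0: "g0 \<in> V" by auto
  then obtain g1 where g1: "(g0,g1) \<in> E" using assms(5) unfolding no_isolated_def nbhd_def by auto
  have g1V: "g1 \<in> V" using g1 EV by auto
  have edge0: "((g0,0),(g1,0)) \<in> E'" unfolding E'_def lex_edges_def Kbar_vertices_def
    using g0 g1V g1 assms(2) by auto
  have bipE: "\<And>u v. (u,v) \<in> E \<Longrightarrow> (u \<in> A \<and> v \<in> B) \<or> (u \<in> B \<and> v \<in> A)"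
    using assms(8) unfolding bipartition_def by auto
  have AB: "A \<union> B = V" "A \<inter> B = {}" using assms(8) unfolding bipartition_def by auto
  obtain u0 v0 where u0: "u0 \<in> A" and v0: "v0 \<in> B" using bipE[OF g1] by auto
  have degs: "\<And>g. g \<in> V \<Longrightarrow> degree E g = degree E u0 \<or> degree E g = degree E v0"
  proof -
    fix g assume "g \<in> V"
    then have "g \<in> A \<or> g \<in> B" using AB by auto
    then show "degree E g = degree E u0 \<or> degree E g = degree E v0"
    proof
      assume "g \<in> A" then show ?thesis using u0 assms(9) by blast
    next
      assume "g \<in> B" then show ?thesis using v0 assms(10) by blast
    qed
  qed
  have dne: "degree E u0 \<noteq> degree E v0"
  proof
    assume "degree E u0 = degree E v0"
    then have "regular V E" unfolding regular_def using degs by (metis (no_types))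
    then show False using assms(7) by simp
  qed
  have degE: "\<And>u v. (u,v) \<in> E \<Longrightarrow> degree E u \<noteq> degree E v"
  proof -
    fix u v assume uv: "(u,v) \<in> E"
    from bipE[OF uv] show "degree E u \<noteq> degree E v"
    proof
      assume "u \<in> A \<and> v \<in> B"
      then have "degree E u = degree E u0" "degree E v = degree E v0"
        using u0 v0 assms(9,10) by blast+
      then show ?thesis using dne by simp
    next
      assume "u \<in> B \<and> v \<in> A"
      then have "degree E u = degree E v0" "degree E v = degree E u0"
        using u0 v0 assms(9,10) by blast+
      then show ?thesis using dne by simp
    qed
  qed
  obtain idx where idx: "bij_betw idx V {0..<m}" using ex_bij_betw_finite_nat[OF fin] assms(6) by auto
  define F where "F = (\<lambda>(g::'a,h::nat). lab k m (idx g) h)"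
  have idxr: "\<And>g. g \<in> V \<Longrightarrow> idx g < m" using idx unfolding bij_betw_def by auto
  have injF: "inj_on F V'"
  proof (rule inj_onI)
    fix x y assume x: "x \<in> V'" and y: "y \<in> V'" and eq: "F x = F y"
    obtain g h where xg: "x = (g,h)" by (cases x)
    obtain g' h' where yg: "y = (g',h')" by (cases y)
    have gV: "g \<in> V" "h < 2*k" "g' \<in> V" "h' < 2*k" using x y xg yg V'eq nk by auto
    have "(idx g, h) = (idx g', h')"
      using inj_onD[OF lab_inj[of k m], of "(idx g, h)" "(idx g', h')"] eq gV idxr
      unfolding F_def xg yg by auto
    then have "g = g'" "h = h'" using idx gV unfolding bij_betw_def inj_on_def by auto
    then show "x = y" using xg yg by simp
  qed
  have imF: "F ` V' \<subseteq> {1..2*k*m}"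
  proof
    fix y assume "y \<in> F ` V'"
    then obtain g h where gh: "g \<in> V" "h < 2*k" "y = lab k m (idx g) h"
      using V'eq nk unfolding F_def by auto
    show "y \<in> {1..2*k*m}"
    proof (cases "h < k")
      case True
      have mk: "m*k \<le> 2*k*m" by simp
      have "1 \<le> lab k m (idx g) h \<and> lab k m (idx g) h \<le> m*k" using lab_low[of "idx g" m h k] idxr[OF gh(1)] True by simp
      then have l1: "1 \<le> lab k m (idx g) h" and l2: "lab k m (idx g) h \<le> m*k" by simp_all
      have "lab k m (idx g) h \<le> 2*k*m" using l2 mk by (rule le_trans)
      then show ?thesis using l1 gh(3) by simp
    next
      case False
      then show ?thesis using lab_high[of "idx g" m k h] idxr[OF gh(1)] gh by simp
    qed
  qed
  have bijF: "bij_betw F V' {1..card V'}"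
  proof -
    have "card (F ` V') = card {1..2*k*m}" using card_image[OF injF] cardV' by simp
    then have "F ` V' = {1..2*k*m}" using imF by (intro card_subset_eq) auto
    then show ?thesis unfolding bij_betw_def using injF cardV' by simp
  qed
  define C where "C = k*(2*k*m+1)"
  have Cpos: "C > 0" using k1 unfolding C_def by simp
  have wF: "\<And>g h. g \<in> V \<Longrightarrow> h < n \<Longrightarrow> weight E' F (g,h) = degree E g * C"
  proof -
    fix g h assume g: "g \<in> V" and h: "h < n"
    have "weight E' F (g,h) = (\<Sum>x\<in>nbhd E g \<times> {0..<n}. F x)"
      unfolding weight_def E'_def using lex_nbhd[OF EV g h] by simp
    also have "... = (\<Sum>g'\<in>nbhd E g. \<Sum>h'\<in>{0..<n}. F (g',h'))"
      by (simp add: sum.cartesian_product)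
    also have "... = (\<Sum>g'\<in>nbhd E g. C)"
    proof (rule sum.cong)
      fix g' assume "g' \<in> nbhd E g"
      then have "g' \<in> V" using EV g unfolding nbhd_def by auto
      then show "(\<Sum>h'\<in>{0..<n}. F (g',h')) = C"
        using lab_colsum[of "idx g'" m k] idxr unfolding F_def C_def nk by simp
    qed simp
    also have "... = degree E g * C" unfolding degree_def by simp
    finally show "weight E' F (g,h) = degree E g * C" .
  qed
  have anti: "ld_antimagic V' E' F"
    unfolding ld_antimagic_def
  proof (intro conjI bijF ballI, clarify)
    fix g h g' h' assume e: "((g,h),(g',h')) \<in> E'"
      and w: "weight E' F (g,h) = weight E' F (g',h')"
    have "g \<in> V" "g' \<in> V" "h < n" "h' < n" "(g,g') \<in> E"
      using e unfolding E'_def lex_edges_def Kbar_vertices_def Kbar_edges_def by auto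
    then have "degree E g * C \<noteq> degree E g' * C" using degE Cpos by simp
    then show False using w wF \<open>g \<in> V\<close> \<open>g' \<in> V\<close> \<open>h < n\<close> \<open>h' < n\<close> by metis
  qed
  have low: "\<And>f. ld_antimagic V' E' f \<Longrightarrow> 2 \<le> card (weight E' f ` V')"
  proof -
    fix f assume "ld_antimagic V' E' f"
    then have ne: "weight E' f (g0,0) \<noteq> weight E' f (g1,0)"
      using edge0 unfolding ld_antimagic_def by auto
    have "(g0,0) \<in> V'" "(g1,0) \<in> V'" using V'eq g0 g1V assms(2) by auto
    then have "{weight E' f (g0,0), weight E' f (g1,0)} \<subseteq> weight E' f ` V'" by auto
    then have "card {weight E' f (g0,0), weight E' f (g1,0)} \<le> card (weight E' f ` V')"
      using finV' by (intro card_mono) auto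
    then show "2 \<le> card (weight E' f ` V')" using ne by simp
  qed
  have up: "card (weight E' F ` V') \<le> 2"
  proof -
    have "weight E' F ` V' \<subseteq> {degree E u0 * C, degree E v0 * C}"
    proof
      fix w assume "w \<in> weight E' F ` V'"
      then obtain g h where gh: "g \<in> V" "h < n" "w = weight E' F (g,h)" using V'eq by auto
      then have "w = degree E g * C" using wF by simp
      then show "w \<in> {degree E u0 * C, degree E v0 * C}" using degs[OF gh(1)] by auto
    qed
    then have "card (weight E' F ` V') \<le> card {degree E u0 * C, degree E v0 * C}"
      by (intro card_mono) auto
    also have "... \<le> 2" by (simp add: card_insert_le_m1)
    finally show ?thesis .
  qed
  have "(LEAST k. \<exists>f. ld_antimagic V' E' f \<and> k = card (weight E' f ` V')) = 2"
  proof (rule Least_equality)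
    show "\<exists>f. ld_antimagic V' E' f \<and> 2 = card (weight E' f ` V')"
      using anti low[OF anti] up by (intro exI[of _ F]) simp
  next
    fix y assume "\<exists>f. ld_antimagic V' E' f \<and> y = card (weight E' f ` V')"
    then show "2 \<le> y" using low by auto
  qed
  then show ?thesis unfolding chi_ld_def V'_def E'_def .
qed

end
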